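(* Let $f:[0,1]\to[0,1]$ be a surjective continuous function that does not admit a splitting sequence. If $f$ admits two 2-cycles $\{s,t\}$ and $\{u,v\}$ with $s<t$, $u<v$ and $s<u$, then there is exactly one component $C$ of $f^{-1}([s,u])$ such that $f(C)=[s,u]$, and there is exactly one component $C'$ of $f^{-1}([v,t])$ such that $f(C')=[v,t]$.
   Context: A 2-cycle is a set $\{s,t\}$ with $s\ne t$, $f(s)=t$, $f(t)=s$. A sequence $(T_n)_{n\in\mathbb N}$ of closed intervals $T_n\subsetneq[0,1]$ (possibly degenerate) is tight if $f(T_{n+1})=T_n$ for every $n$ and $T_n$ is nondegenerate for all sufficiently large $n$. A tight sequence $(T_n)$, $T_n=[l_n,r_n]$, is a splitting sequence admitted by $f$ if there are an infinite set $N\subseteq\mathbb N$ and nondegenerate closed intervals $S_n\subseteq[0,1]$ ($n\in N$) with $S_n\cap T_n\subseteq\{l_n,r_n\}$ and $f(S_n)=f(T_n)$ for all $n\in N$. *)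

theory Defs
  imports "HOL-Analysis.Analysis"
begin

text \<open>Maps of the unit interval are modelled as functions real to real; only
their values on {0..1} matter.\<close>

definition two_cycle :: "(real \<Rightarrow> real) \<Rightarrow> real \<Rightarrow> real \<Rightarrow> bool" where
  "two_cycle f s t \<longleftrightarrow> s \<in> {0..1} \<and> t \<in> {0..1} \<and> s \<noteq> t \<and> f s = t \<and> f t = s"

definition closed_interval :: "real set \<Rightarrow> bool" where
  "closed_interval I \<longleftrightarrow> (\<exists>a b. a \<le> b \<and> I = {a..b})"

definition nondegenerate :: "real set \<Rightarrow> bool" where
  "nondegenerate I \<longleftrightarrow> (\<exists>a b. a < b \<and> I = {a..b})"

definition tight :: "(real \<Rightarrow> real) \<Rightarrow> (nat \<Rightarrow> real set) \<Rightarrow> bool" where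
  "tight f T \<longleftrightarrow>
     (\<forall>n. closed_interval (T n) \<and> T n \<subset> {0..1}) \<and>
     (\<forall>n. f ` T (Suc n) = T n) \<and>
     (\<exists>n0. \<forall>n\<ge>n0. nondegenerate (T n))"

definition splitting_sequence :: "(real \<Rightarrow> real) \<Rightarrow> (nat \<Rightarrow> real set) \<Rightarrow> bool" where
  "splitting_sequence f T \<longleftrightarrow> tight f T \<and>
     (\<exists>N S. infinite N \<and>
        (\<forall>n\<in>N. nondegenerate (S n) \<and> S n \<subseteq> {0..1} \<and>
                 S n \<inter> T n \<subseteq> {Inf (T n), Sup (T n)} \<and> f ` S n = f ` T n))"

definition admits_splitting_sequence :: "(real \<Rightarrow> real) \<Rightarrow> bool" where
  "admits_splitting_sequence f \<longleftrightarrow> (\<exists>T. splitting_sequence f T)"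

end

theory Submission imports Defs begin

lemma hull_img:
  fixes f :: "real \<Rightarrow> real"
  assumes cont: "continuous_on {0..1} f" and x: "x \<in> {0..1}" and y: "y \<in> {0..1}"
  shows "{min (f x) (f y)..max (f x) (f y)} \<subseteq> f ` {min x y..max x y}"
proof -
  have sub: "{min x y..max x y} \<subseteq> {0..1}" using x y by auto
  have "connected (f ` {min x y..max x y})"
    by (rule connected_continuous_image[OF continuous_on_subset[OF cont sub]]) simp
  moreover have "f x \<in> f ` {min x y..max x y}" "f y \<in> f ` {min x y..max x y}" by auto
  ultimately have "min (f x) (f y) \<in> f ` {min x y..max x y}" "max (f x) (f y) \<in> f ` {min x y..max x y}"
    and cn: "connected (f ` {min x y..max x y})"
    by (simp_all add: min_def max_def)
  then show ?thesis using connected_contains_Icc[OF cn] by blast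
qed

lemma cover0:
  fixes f :: "real \<Rightarrow> real"
  assumes pq: "p < q" and cont: "continuous_on {p..q} f" and fp: "f p = a" and fq: "f q = b" and ab: "a < b"
  shows "\<exists>c d. p \<le> c \<and> c < d \<and> d \<le> q \<and> f ` {c..d} = {a..b}"
proof -
  define Z where "Z = {x\<in>{p..q}. f x = a}"
  have Zc: "closed Z" unfolding Z_def by (rule continuous_closed_preimage_constant[OF cont]) simp
  have pZ: "p \<in> Z" using pq fp by (auto simp: Z_def)
  have bZ: "bdd_above Z" unfolding Z_def by (rule bdd_above_mono[of "{p..q}"]) auto
  define c where "c = Sup Z"
  have cZ: "c \<in> Z" unfolding c_def using closed_contains_Sup[OF _ bZ Zc] pZ by blast
  have cub: "\<And>x. x \<in> Z \<Longrightarrow> x \<le> c" unfolding c_def using bZ by (simp add: cSup_upper)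
  have fc: "f c = a" and pc: "p \<le> c" and cq0: "c \<le> q" using cZ by (auto simp: Z_def)
  have cq: "c < q" using cq0 fc fq ab by (cases "c = q") auto
  define W where "W = {x\<in>{c..q}. f x = b}"
  have Wc: "closed W" unfolding W_def
    by (rule continuous_closed_preimage_constant[OF continuous_on_subset[OF cont]]) (use pc in auto)
  have qW: "q \<in> W" using cq fq by (auto simp: W_def)
  have bW: "bdd_below W" unfolding W_def by (rule bdd_below_mono[of "{c..q}"]) auto
  define d where "d = Inf W"
  have dW: "d \<in> W" unfolding d_def using closed_contains_Inf[OF _ bW Wc] qW by blast
  have dlb: "\<And>x. x \<in> W \<Longrightarrow> d \<le> x" unfolding d_def using bW by (simp add: cInf_lower)
  have fd: "f d = b" and cd0: "c \<le> d" and dq: "d \<le> q" using dW by (auto simp: W_def)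
  have cd: "c < d" using cd0 fd fc ab by (cases "c = d") auto
  have contcd: "continuous_on {x..y} f" if "c \<le> x" "y \<le> d" for x y
    by (rule continuous_on_subset[OF cont]) (use that pc dq in auto)
  have sub: "f ` {c..d} \<subseteq> {a..b}"
  proof
    fix z assume "z \<in> f ` {c..d}"
    then obtain x where x: "x \<in> {c..d}" "z = f x" by auto
    have "a \<le> f x"
    proof (rule ccontr)
      assume "\<not> a \<le> f x"
      then have lt: "f x < a" by simp
      obtain y where y: "x \<le> y" "y \<le> d" "f y = a"
        using IVT'[of f x a d] lt fd ab x contcd[of x d] by force
      have "y \<in> Z" using y x pc dq by (auto simp: Z_def)
      then have "y \<le> c" by (rule cub)
      then have "x = c" using x y by auto
      then show False using lt fc by simp
    qed
    moreover have "f x \<le> b"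
    proof (rule ccontr)
      assume "\<not> f x \<le> b"
      then have lt: "f x > b" by simp
      obtain y where y: "c \<le> y" "y \<le> x" "f y = b"
        using IVT'[of f c b x] lt fc ab x contcd[of c x] by force
      have "y \<in> W" using y x dq by (auto simp: W_def)
      then have "d \<le> y" by (rule dlb)
      then have "x = d" using x y by auto
      then show False using lt fd by simp
    qed
    ultimately show "z \<in> {a..b}" using x by simp
  qed
  have sup: "{a..b} \<subseteq> f ` {c..d}"
  proof
    fix z assume "z \<in> {a..b}"
    then obtain x where "c \<le> x" "x \<le> d" "f x = z"
      using IVT'[of f c z d] fc fd cd contcd[of c d] by force
    then show "z \<in> f ` {c..d}" by auto
  qed
  show ?thesis using sub sup pc cd dq by blast
qed

lemma cover0':
  fixes f :: "real \<Rightarrow> real"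
  assumes pq: "p < q" and cont: "continuous_on {p..q} f" and fp: "f p = b" and fq: "f q = a" and ab: "a < b"
  shows "\<exists>c d. p \<le> c \<and> c < d \<and> d \<le> q \<and> f ` {c..d} = {a..b}"
proof -
  have "continuous_on {p..q} (\<lambda>x. - f x)" using cont by (intro continuous_intros)
  from cover0[OF pq this, of "-b" "-a"] fp fq ab
  obtain c d where cd: "p \<le> c" "c < d" "d \<le> q" "(\<lambda>x. - f x) ` {c..d} = {-b..-a}" by auto
  have "f ` {c..d} = uminus ` ((\<lambda>x. - f x) ` {c..d})" by (auto simp: image_image)
  also have "\<dots> = {a..b}" using cd(4) by simp
  finally show ?thesis using cd by blast
qed

lemma cover:
  fixes f :: "real \<Rightarrow> real"
  assumes cont: "continuous_on {0..1} f" and C: "connected C" "C \<subseteq> {0..1}" and ab: "a < b"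
    and sub: "{a..b} \<subseteq> f ` C"
  shows "\<exists>c d. c < d \<and> {c..d} \<subseteq> C \<and> f ` {c..d} = {a..b}"
proof -
  have "a \<in> f ` C" "b \<in> f ` C" using sub ab by auto
  then obtain p q where p: "p \<in> C" "f p = a" and q: "q \<in> C" "f q = b" by (auto simp: image_iff)
  have "p \<noteq> q" using p q ab by auto
  then consider "p < q" | "q < p" by linarith
  then show ?thesis
  proof cases
    case 1
    have PQ: "{p..q} \<subseteq> C" using connected_contains_Icc[OF C(1) p(1) q(1)] .
    have "continuous_on {p..q} f" by (rule continuous_on_subset[OF cont]) (use PQ C p(1) q(1) in auto)
    from cover0[OF 1 this p(2) q(2) ab] obtain c d where "p \<le> c" "c < d" "d \<le> q" "f ` {c..d} = {a..b}" by blast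
    then show ?thesis using PQ by (intro exI[of _ c] exI[of _ d]) auto
  next
    case 2
    have PQ: "{q..p} \<subseteq> C" using connected_contains_Icc[OF C(1) q(1) p(1)] .
    have "continuous_on {q..p} f" by (rule continuous_on_subset[OF cont]) (use PQ C p(1) q(1) in auto)
    from cover0'[OF 2 this q(2) p(2) ab] obtain c d where "q \<le> c" "c < d" "d \<le> p" "f ` {c..d} = {a..b}" by blast
    then show ?thesis using PQ by (intro exI[of _ c] exI[of _ d]) auto
  qed
qed

lemma cover_nd:
  fixes f :: "real \<Rightarrow> real"
  assumes cont: "continuous_on {0..1} f" and C: "connected C" "C \<subseteq> {0..1}"
    and J: "nondegenerate J" and sub: "J \<subseteq> f ` C"
  shows "\<exists>K. nondegenerate K \<and> K \<subseteq> C \<and> f ` K = J"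
proof -
  obtain a b where ab: "a < b" "J = {a..b}" using J by (auto simp: nondegenerate_def)
  from cover[OF cont C ab(1)] sub ab obtain c d where "c < d" "{c..d} \<subseteq> C" "f ` {c..d} = {a..b}" by auto
  then show ?thesis using ab by (intro exI[of _ "{c..d}"]) (auto simp: nondegenerate_def)
qed

primrec seqT :: "(real \<Rightarrow> real) \<Rightarrow> real set \<Rightarrow> real set \<Rightarrow> nat \<Rightarrow> real set" where
  "seqT f A D 0 = D"
| "seqT f A D (Suc n) = (SOME K. nondegenerate K \<and> K \<subseteq> (if even n then A else D) \<and> f ` K = seqT f A D n)"

lemma gen_split:
  fixes f :: "real \<Rightarrow> real"
  assumes cont: "continuous_on {0..1} f" and surj: "f ` {0..1} = {0..1}"
    and A: "connected A" "A \<subseteq> {0..1}"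
    and D: "D = {d1..d2}" "d1 < d2" "D \<subseteq> {0..1}" "D \<noteq> {0..1}"
    and DA: "D \<subseteq> f ` A" and AD: "A \<subseteq> f ` D"
    and Scond: "\<And>K J. nondegenerate K \<Longrightarrow> K \<subseteq> A \<Longrightarrow> f ` K = J \<Longrightarrow> J \<subseteq> D \<Longrightarrow> nondegenerate J \<Longrightarrow>
        \<exists>S. nondegenerate S \<and> S \<subseteq> {0..1} \<and> S \<inter> K \<subseteq> {Inf K, Sup K} \<and> f ` S = J"
  shows "admits_splitting_sequence f"
proof -
  define T where "T = seqT f A D"
  have Dc: "connected D" using D by simp
  have ex: "\<exists>K. nondegenerate K \<and> K \<subseteq> (if even n then A else D) \<and> f ` K = T n"
    if "nondegenerate (T n) \<and> T n \<subseteq> (if even n then D else A)" for n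
  proof (cases "even n")
    case True
    then show ?thesis using cover_nd[OF cont A, of "T n"] that DA by auto
  next
    case False
    then show ?thesis using cover_nd[OF cont Dc D(3), of "T n"] that AD by auto
  qed
  have step: "nondegenerate (T (Suc n)) \<and> T (Suc n) \<subseteq> (if even n then A else D) \<and> f ` T (Suc n) = T n"
    if "nondegenerate (T n) \<and> T n \<subseteq> (if even n then D else A)" for n
    using someI_ex[OF ex[OF that]] by (simp add: T_def)
  have P: "nondegenerate (T n) \<and> T n \<subseteq> (if even n then D else A)" for n
  proof (induction n)
    case 0
    then show ?case using D by (auto simp: T_def nondegenerate_def)
  next
    case (Suc n)
    then show ?case using step[OF Suc] by auto
  qed
  have img: "f ` T (Suc n) = T n" for n using step[OF P] by blast
  have sub01: "T n \<subseteq> {0..1}" for n using P[of n] A D by (auto split: if_splits)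
  have proper: "T n \<subset> {0..1}" for n
  proof -
    have "T n \<noteq> {0..1}"
    proof
      assume eq: "T n = {0..1}"
      show False
      proof (cases "even n")
        case True
        then have "{0..1} \<subseteq> D" using P[of n] eq by simp
        then show False using D by auto
      next
        case False
        then obtain m where m: "n = Suc m" by (cases n) auto
        with False have m: "n = Suc m" "even m" by auto
        have "f ` T n = T m" using img m by simp
        then have "{0..1} \<subseteq> D" using P[of m] m eq surj by simp
        then show False using D by auto
      qed
    qed
    then show ?thesis using sub01 by auto
  qed
  define N where "N = {n::nat. odd n}"
  have infN: "infinite N" unfolding N_def infinite_nat_iff_unbounded_le
    by (intro allI, rule_tac x="2*m+1" in exI) auto
  have "\<forall>n\<in>N. \<exists>S. nondegenerate S \<and> S \<subseteq> {0..1} \<and> S \<inter> T n \<subseteq> {Inf (T n), Sup (T n)} \<and> f ` S = f ` T n"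
  proof
    fix n assume "n \<in> N"
    then have on: "odd n" unfolding N_def by simp
    then obtain m where m: "n = Suc m" by (cases n) auto
    with on have m: "n = Suc m" "even m" by auto
    have K: "nondegenerate (T n)" "T n \<subseteq> A" using P[of n] m by auto
    have J: "T m \<subseteq> D" "nondegenerate (T m)" using P[of m] m by auto
    have fK: "f ` T n = T m" using img m by simp
    from Scond[OF K fK J] fK show "\<exists>S. nondegenerate S \<and> S \<subseteq> {0..1} \<and> S \<inter> T n \<subseteq> {Inf (T n), Sup (T n)} \<and> f ` S = f ` T n"
      by simp
  qed
  from bchoice[OF this] obtain S where S: "\<forall>n\<in>N. nondegenerate (S n) \<and> S n \<subseteq> {0..1} \<and> S n \<inter> T n \<subseteq> {Inf (T n), Sup (T n)} \<and> f ` S n = f ` T n"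
    by blast
  have ci: "closed_interval (T n)" for n using P[of n]
    by (metis closed_interval_def less_imp_le nondegenerate_def)
  have "tight f T" unfolding tight_def using ci proper img P by blast
  then have "splitting_sequence f T" unfolding splitting_sequence_def using infN S by blast
  then show ?thesis unfolding admits_splitting_sequence_def by blast
qed

lemma scond_B:
  fixes f :: "real \<Rightarrow> real"
  assumes cont: "continuous_on {0..1} f" and A: "A = {a1..a2}" and B: "B = {b1..b2}" "B \<subseteq> {0..1}"
    and AB: "A \<inter> B \<subseteq> {a1, a2}" and DB: "D \<subseteq> f ` B"
    and K: "nondegenerate K" "K \<subseteq> A" and fK: "f ` K = J" and J: "J \<subseteq> D" "nondegenerate J"
  shows "\<exists>S. nondegenerate S \<and> S \<subseteq> {0..1} \<and> S \<inter> K \<subseteq> {Inf K, Sup K} \<and> f ` S = J"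
proof -
  have Bc: "connected B" using B by simp
  obtain S where S: "nondegenerate S" "S \<subseteq> B" "f ` S = J"
    using cover_nd[OF cont Bc B(2) J(2)] J DB by blast
  obtain k1 k2 where k: "k1 < k2" "K = {k1..k2}" using K by (auto simp: nondegenerate_def)
  have IS: "Inf K = k1" "Sup K = k2" using k by auto
  have "S \<inter> K \<subseteq> {k1, k2}"
  proof
    fix x assume x: "x \<in> S \<inter> K"
    then have "x \<in> {a1, a2}" using S K AB by blast
    moreover have "a1 \<le> k1" "k2 \<le> a2" using K(2) k A by auto
    ultimately show "x \<in> {k1, k2}" using x k by auto
  qed
  then show ?thesis using S B(2) IS by (intro exI[of _ S]) auto
qed

lemma comp_unique:
  fixes f :: "real \<Rightarrow> real"
  assumes cont: "continuous_on {0..1} f" and surj: "f ` {0..1} = {0..1}"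
    and nos: "\<not> admits_splitting_sequence f"
    and A: "connected A" "A \<subseteq> {0..1}"
    and D: "D = {d1..d2}" "d1 < d2" "D \<subseteq> {0..1}" "D \<noteq> {0..1}"
    and DA: "D \<subseteq> f ` A" and AD: "A \<subseteq> f ` D"
  shows "\<exists>!C. C \<in> components {x \<in> {0..1}. f x \<in> D} \<and> f ` C = D"
proof -
  define X where "X = {x \<in> {0..1}. f x \<in> D}"
  have ndD: "nondegenerate D" using D by (auto simp: nondegenerate_def)
  obtain K where K: "nondegenerate K" "K \<subseteq> A" "f ` K = D" using cover_nd[OF cont A ndD DA] by blast
  have KX: "K \<subseteq> X" using K A by (auto simp: X_def)
  have Kc: "connected K" "K \<noteq> {}" using K(1) by (auto simp: nondegenerate_def)
  obtain C where C: "C \<in> components X" "K \<subseteq> C" using exists_component_superset[OF KX _ Kc(1)] KX Kc(2) by blast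
  have "f ` C = D"
  proof
    show "f ` C \<subseteq> D" using in_components_subset[OF C(1)] by (auto simp: X_def)
    show "D \<subseteq> f ` C" using K(3) C(2) by blast
  qed
  note fC = this
  have uq: "C1 = C2" if C1: "C1 \<in> components X" "f ` C1 = D" and C2: "C2 \<in> components X" "f ` C2 = D" for C1 C2
  proof (rule ccontr)
    assume ne: "C1 \<noteq> C2"
    have "admits_splitting_sequence f"
    proof (rule gen_split[OF cont surj A D DA AD])
      fix K J assume K: "nondegenerate K" "K \<subseteq> A" and fK: "f ` K = J" and J: "J \<subseteq> D" "nondegenerate J"
      have KX: "K \<subseteq> X" using K A fK J by (auto simp: X_def)
      have Kc: "connected K" "K \<noteq> {}" using K(1) by (auto simp: nondegenerate_def)
      obtain C where C: "C \<in> components X" "K \<subseteq> C" using exists_component_superset[OF KX _ Kc(1)] KX Kc(2) by blast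
      obtain Ci where Ci: "Ci \<in> components X" "f ` Ci = D" "Ci \<noteq> C" using C1 C2 ne by metis
      have dis: "Ci \<inter> C = {}" using components_nonoverlap[OF Ci(1) C(1)] Ci(3) by blast
      have Cic: "connected Ci" "Ci \<subseteq> {0..1}" using in_components_connected[OF Ci(1)] in_components_subset[OF Ci(1)]
        by (auto simp: X_def)
      obtain S where S: "nondegenerate S" "S \<subseteq> Ci" "f ` S = J" using cover_nd[OF cont Cic J(2)] J Ci(2) by blast
      show "\<exists>S. nondegenerate S \<and> S \<subseteq> {0..1} \<and> S \<inter> K \<subseteq> {Inf K, Sup K} \<and> f ` S = J"
        using S dis C(2) Cic(2) by (intro exI[of _ S]) auto
    qed
    then show False using nos by blast
  qed
  show ?thesis unfolding X_def[symmetric]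
  proof (rule ex1I[of _ C])
    show "C \<in> components X \<and> f ` C = D" using C(1) fC by simp
    fix C' assume "C' \<in> components X \<and> f ` C' = D"
    then show "C' = C" using uq[of C' C] C(1) fC by simp
  qed
qed

theorem lemma3p14:
  fixes f :: "real \<Rightarrow> real" and s t u v :: real
  assumes "continuous_on {0..1} f"
    and "f ` {0..1} = {0..1}"
    and "\<not> admits_splitting_sequence f"
    and "two_cycle f s t" and "two_cycle f u v"
    and "s < t" and "u < v" and "s < u"
  shows "(\<exists>!C. C \<in> components {x \<in> {0..1}. f x \<in> {s..u}} \<and> f ` C = {s..u}) \<and>
         (\<exists>!C'. C' \<in> components {x \<in> {0..1}. f x \<in> {v..t}} \<and> f ` C' = {v..t})"
proof -
  note cont = assms(1) and surj = assms(2) and nos = assms(3)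
  have st: "s \<in> {0..1}" "t \<in> {0..1}" "f s = t" "f t = s" using assms(4) by (auto simp: two_cycle_def)
  have uv: "u \<in> {0..1}" "v \<in> {0..1}" "f u = v" "f v = u" using assms(5) by (auto simp: two_cycle_def)
  have H: "\<And>x y. x \<in> {0..1} \<Longrightarrow> y \<in> {0..1} \<Longrightarrow> {min (f x) (f y)..max (f x) (f y)} \<subseteq> f ` {min x y..max x y}"
    using hull_img[OF cont] by blast
  have P1: "\<exists>!C. C \<in> components {x \<in> {0..1}. f x \<in> {s..u}} \<and> f ` C = {s..u}"
  proof (rule comp_unique[OF cont surj nos _ _ refl])
    show "connected {min t v..max t v}" by simp
    show "{min t v..max t v} \<subseteq> {0..1}" using st uv by auto
    show "s < u" by fact
    show "{s..u} \<subseteq> {0..1}" using st uv by auto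
    show "{s..u} \<noteq> {0..1}"
    proof
      assume "{s..u} = {0..1}"
      then have "(1::real) \<in> {s..u}" by simp
      then show False using assms(7) uv by simp
    qed
    show "{s..u} \<subseteq> f ` {min t v..max t v}" using H[of t v] st uv assms by (simp add: min_def max_def)
    show "{min t v..max t v} \<subseteq> f ` {s..u}" using H[of s u] st uv assms by (simp add: min_def max_def)
  qed
  have vt: "v < t"
  proof (rule ccontr)
    assume "\<not> v < t"
    moreover have "v \<noteq> t" using st uv assms by auto
    ultimately have tv: "t < v" by simp
    have "t \<noteq> u" using st uv assms by auto
    then consider "t < u" | "u < t" by linarith
    then have "admits_splitting_sequence f"
    proof cases
      case 1
      show ?thesis
      proof (rule gen_split[OF cont surj _ _ refl])
        show "connected {s..t}" by simp
        show "{s..t} \<subseteq> {0..1}" using st by auto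
        then show "{s..t} \<subseteq> {0..1}" .
        show "s < t" by fact
        show "{s..t} \<noteq> {0..1}"
        proof
          assume "{s..t} = {0..1}"
          then have "(1::real) \<in> {s..t}" by simp
          then show False using tv uv by simp
        qed
        show "{s..t} \<subseteq> f ` {s..t}" using H[of s t] st assms by (simp add: min_def max_def)
        then show "{s..t} \<subseteq> f ` {s..t}" .
        fix K J assume a: "nondegenerate K" "K \<subseteq> {s..t}" "f ` K = J" "J \<subseteq> {s..t}" "nondegenerate J"
        have b1: "{s..t} \<subseteq> f ` {t..u}"
        proof -
          have "{s..t} \<subseteq> {min (f t) (f u)..max (f t) (f u)}" using st uv assms 1 tv by (simp add: min_def max_def)
          also have "\<dots> \<subseteq> f ` {min t u..max t u}" using H[of t u] st uv by simp
          also have "{min t u..max t u} = {t..u}" using 1 by (simp add: min_def max_def)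
          finally show ?thesis .
        qed
        have b2: "{s..t} \<inter> {t..u} \<subseteq> {s, t}" by auto
        have b3: "{t..u} \<subseteq> {0..1}" using st uv by simp
        show "\<exists>S. nondegenerate S \<and> S \<subseteq> {0..1} \<and> S \<inter> K \<subseteq> {Inf K, Sup K} \<and> f ` S = J"
          by (rule scond_B[OF cont refl refl b3 b2 b1 a])
      qed
    next
      case 2
      show ?thesis
      proof (rule gen_split[OF cont surj _ _ refl])
        show "connected {s..u}" by simp
        show "{s..u} \<subseteq> {0..1}" using st uv by auto
        show "t < v" by fact
        show "{t..v} \<subseteq> {0..1}" using st uv by auto
        show "{t..v} \<noteq> {0..1}"
        proof
          assume "{t..v} = {0..1}"
          then have "(0::real) \<in> {t..v}" by simp
          then show False using assms st uv by simp
        qed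
        show "{t..v} \<subseteq> f ` {s..u}" using H[of s u] st uv assms tv by (simp add: min_def max_def)
        show "{s..u} \<subseteq> f ` {t..v}" using H[of t v] st uv assms tv by (simp add: min_def max_def)
        fix K J assume a: "nondegenerate K" "K \<subseteq> {s..u}" "f ` K = J" "J \<subseteq> {t..v}" "nondegenerate J"
        have b1: "{t..v} \<subseteq> f ` {u..t}"
        proof -
          have "{t..v} \<subseteq> {min (f u) (f t)..max (f u) (f t)}" using st uv assms 2 tv by (simp add: min_def max_def)
          also have "\<dots> \<subseteq> f ` {min u t..max u t}" using H[of u t] st uv by simp
          also have "{min u t..max u t} = {u..t}" using 2 by (simp add: min_def max_def)
          finally show ?thesis .
        qed
        have b2: "{s..u} \<inter> {u..t} \<subseteq> {s, u}" by auto
        have b3: "{u..t} \<subseteq> {0..1}" using st uv by simp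
        show "\<exists>S. nondegenerate S \<and> S \<subseteq> {0..1} \<and> S \<inter> K \<subseteq> {Inf K, Sup K} \<and> f ` S = J"
          by (rule scond_B[OF cont refl refl b3 b2 b1 a])
      qed
    qed
    then show False using nos by blast
  qed
  have P2: "\<exists>!C'. C' \<in> components {x \<in> {0..1}. f x \<in> {v..t}} \<and> f ` C' = {v..t}"
  proof (rule comp_unique[OF cont surj nos _ _ refl])
    show "connected {s..u}" by simp
    show "{s..u} \<subseteq> {0..1}" using st uv by auto
    show "v < t" by fact
    show "{v..t} \<subseteq> {0..1}" using st uv by auto
    show "{v..t} \<noteq> {0..1}"
        proof
          assume "{v..t} = {0..1}"
          then have "(0::real) \<in> {v..t}" by simp
          then show False using assms st uv by simp
        qed
    show "{v..t} \<subseteq> f ` {s..u}" using H[of s u] st uv assms vt by (simp add: min_def max_def)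
    show "{s..u} \<subseteq> f ` {v..t}" using H[of v t] st uv assms vt by (simp add: min_def max_def)
  qed
  show ?thesis using P1 P2 by blast
qed

end
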